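(* Let $N\ge1$, $\varphi,\gamma\in(0,1)$ with $\varphi+\gamma\ge1$, $\alpha=\min\{\varphi,\gamma\}$. Let $(X_t)_{t\ge0}$ be a Markov chain on $\{0,1\}^N$ whose one-step transition probabilities are $$p_{t-1\to t}(\boldsymbol{x},\boldsymbol{y})=\varphi^{\|\boldsymbol{y}\|}\bar\varphi^{N-\|\boldsymbol{y}\|}\Big\{1+\sum_{A\subseteq[N],A\neq\emptyset}\kappa_{t,A}\prod_{k\in A}\Big(1-\frac{\boldsymbol{y}[k]}{\varphi}\Big)\Big(1-\frac{\boldsymbol{x}[k]}{\gamma}\Big)\Big\},\quad \kappa_{t,A}=\Big(\frac{\alpha}{\bar\alpha}\Big)^{|A|}\mathbb{E}\Big[\prod_{k\in A}\Big(1-\frac{Z_t[k]}{\alpha}\Big)\Big],$$ where each $Z_t$ is a random element of $\{0,1\}^N$ with exchangeable coordinates. Then $(\|X_t\|)_t$ is a Markov chain with transition distribution $$p_{t-1\to t}(\|\boldsymbol{y}\|\mid\|\boldsymbol{x}\|)=\binom{N}{\|\boldsymbol{y}\|}\varphi^{\|\boldsymbol{y}\|}\bar\varphi^{N-\|\boldsymbol{y}\|}\Big\{1+\sum_{k=1}^N\binom{N}{k}\tilde\kappa_{t,k}Q_k(\|\boldsymbol{y}\|;N,\varphi)Q_k(\|\boldsymbol{x}\|;N,\gamma)\Big\},$$ where $\tilde\kappa_{t,k}=(\alpha/\bar\alpha)^k\mathbb{E}[Q_k(\|Z_t\|;N,\alpha)]$.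
   Context: $\bar a=1-a$; $[N]=\{1,\dots,N\}$; $\|\boldsymbol{x}\|$ is the number of ones of $\boldsymbol{x}$ (its Hamming distance from $\boldsymbol{0}$). The Krawtchouk polynomials $Q_n(\zeta;N,a)$ are defined by $\sum_{n=0}^N\binom{N}{n}Q_n(\zeta;N,a)s^n=(1-(\bar a/a)s)^\zeta(1+s)^{N-\zeta}$. *)

theory Defs
  imports "HOL-Computational_Algebra.Polynomial" "HOL-Combinatorics.Permutations"
begin

text \<open>Binary vectors x in {0,1}^N are represented by their support, a subset of {1..N};
  the coordinate x[k] is bit x k and the weight ||x|| is card x.\<close>

definition bit :: "nat set \<Rightarrow> nat \<Rightarrow> real" where
  "bit x k = (if k \<in> x then 1 else 0)"

definition krawtchouk :: "nat \<Rightarrow> real \<Rightarrow> nat \<Rightarrow> nat \<Rightarrow> real" where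
  "krawtchouk N a \<zeta> n =
     coeff ([:1, - ((1 - a) / a):] ^ \<zeta> * [:1, 1:] ^ (N - \<zeta>)) n / real (N choose n)"

text \<open>Law of Z_t: a probability mass function w t on subsets of {1..N}, exchangeable.\<close>

definition exch_law :: "nat \<Rightarrow> (nat set \<Rightarrow> real) \<Rightarrow> bool" where
  "exch_law N w \<longleftrightarrow>
     (\<forall>S \<in> Pow {1..N}. w S \<ge> 0) \<and> (\<Sum>S\<in>Pow {1..N}. w S) = 1 \<and>
     (\<forall>\<pi> S. \<pi> permutes {1..N} \<and> S \<subseteq> {1..N} \<longrightarrow> w (\<pi> ` S) = w S)"

definition kappa :: "nat \<Rightarrow> real \<Rightarrow> (nat \<Rightarrow> nat set \<Rightarrow> real) \<Rightarrow> nat \<Rightarrow> nat set \<Rightarrow> real" where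
  "kappa N \<alpha> w t A = (\<alpha> / (1 - \<alpha>)) ^ card A *
     (\<Sum>S\<in>Pow {1..N}. w t S * (\<Prod>k\<in>A. 1 - bit S k / \<alpha>))"

definition trans_p :: "nat \<Rightarrow> real \<Rightarrow> real \<Rightarrow> (nat \<Rightarrow> nat set \<Rightarrow> real)
                       \<Rightarrow> nat \<Rightarrow> nat set \<Rightarrow> nat set \<Rightarrow> real" where
  "trans_p N \<phi> \<gamma> w t x y =
     (let \<alpha> = min \<phi> \<gamma> in
      \<phi> ^ card y * (1 - \<phi>) ^ (N - card y) *
      (1 + (\<Sum>A\<in>Pow {1..N} - {{}}. kappa N \<alpha> w t A *
              (\<Prod>k\<in>A. (1 - bit y k / \<phi>) * (1 - bit x k / \<gamma>)))))"

definition kappa_tilde :: "nat \<Rightarrow> real \<Rightarrow> (nat \<Rightarrow> nat set \<Rightarrow> real) \<Rightarrow> nat \<Rightarrow> nat \<Rightarrow> real" where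
  "kappa_tilde N \<alpha> w t k = (\<alpha> / (1 - \<alpha>)) ^ k *
     (\<Sum>S\<in>Pow {1..N}. w t S * krawtchouk N \<alpha> (card S) k)"

definition trans_q :: "nat \<Rightarrow> real \<Rightarrow> real \<Rightarrow> (nat \<Rightarrow> nat set \<Rightarrow> real)
                       \<Rightarrow> nat \<Rightarrow> nat \<Rightarrow> nat \<Rightarrow> real" where
  "trans_q N \<phi> \<gamma> w t i j =
     (let \<alpha> = min \<phi> \<gamma> in
      real (N choose j) * \<phi> ^ j * (1 - \<phi>) ^ (N - j) *
      (1 + (\<Sum>k=1..N. real (N choose k) * kappa_tilde N \<alpha> w t k *
              krawtchouk N \<phi> j k * krawtchouk N \<gamma> i k)))"

text \<open>Finite-dimensional distributions of a Markov chain with initial law \<mu> and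
  time-dependent one-step kernels P t (step t-1 to t): probability of the path
  xs 0, ..., xs T.\<close>

definition path_prob :: "('s \<Rightarrow> real) \<Rightarrow> (nat \<Rightarrow> 's \<Rightarrow> 's \<Rightarrow> real) \<Rightarrow> nat \<Rightarrow> (nat \<Rightarrow> 's) \<Rightarrow> real" where
  "path_prob \<mu> P T xs = \<mu> (xs 0) * (\<Prod>t\<in>{1..T}. P t (xs (t - 1)) (xs t))"

end

theory Submission imports Defs begin

lemma prod_monom1: "finite X \<Longrightarrow> (\<Prod>x\<in>X. monom (f x) 1) = monom (\<Prod>x\<in>X. f x :: real) (card X)"
  by (induction X rule: finite_induct) (auto simp: mult_monom monom_0 one_pCons)

lemma lin_poly: "[:1, c:] = monom c 1 + (1 :: real poly)"
  by (rule poly_eqI) (auto simp: coeff_pCons coeff_monom split: nat.splits)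

lemma esym_coeff:
  assumes "finite I"
  shows "coeff (\<Prod>i\<in>I. [:1, f i:]) k = (\<Sum>A\<in>{A\<in>Pow I. card A = k}. \<Prod>i\<in>A. f i :: real)"
proof -
  have "(\<Prod>i\<in>I. [:1, f i:]) = (\<Prod>i\<in>I. monom (f i) 1 + 1)" by (simp add: lin_poly)
  also have "\<dots> = (\<Sum>X\<in>Pow I. (\<Prod>x\<in>X. monom (f x) 1) * (\<Prod>x\<in>I-X. 1))"
    by (rule prod_add[OF assms])
  also have "\<dots> = (\<Sum>X\<in>Pow I. monom (\<Prod>x\<in>X. f x) (card X))"
    using prod_monom1[of _ f] finite_subset[OF _ assms] by (intro sum.cong) auto
  finally have "coeff (\<Prod>i\<in>I. [:1, f i:]) k = (\<Sum>X\<in>Pow I. if card X = k then (\<Prod>x\<in>X. f x) else 0)"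
    by (simp add: coeff_sum)
  also have "\<dots> = (\<Sum>A\<in>{A\<in>Pow I. card A = k}. \<Prod>i\<in>A. f i)"
    by (simp add: sum.inter_filter[symmetric] assms)
  finally show ?thesis .
qed

lemma E1:
  assumes "z \<subseteq> {1..N}" "a \<noteq> 0" "k \<le> N"
  shows "(\<Sum>A\<in>{A\<in>Pow {1..N}. card A = k}. \<Prod>i\<in>A. 1 - bit z i / a)
         = real (N choose k) * krawtchouk N a (card z) k"
proof -
  have "(\<Prod>i\<in>{1..N}. [:1, 1 - bit z i / a:]) = (\<Prod>i\<in>{1..N}. if i \<in> z then [:1, - ((1 - a) / a):] else [:1,1:])"
    using assms(2) by (intro prod.cong) (auto simp: bit_def field_simps)
  also have "\<dots> = [:1, - ((1 - a) / a):] ^ card z * [:1, 1:] ^ (N - card z)"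
  proof -
    have "finite z" using assms(1) finite_subset by blast
    moreover have "card ({1..N} - z) = N - card z" using assms(1) by (simp add: card_Diff_subset finite_subset)
    moreover have "{1..N} \<inter> z = z" using assms(1) by auto
    moreover have "{1..N} \<inter> - z = {1..N} - z" by auto
    ultimately show ?thesis by (simp add: prod.If_cases)
  qed
  finally have "(\<Sum>A\<in>{A\<in>Pow {1..N}. card A = k}. \<Prod>i\<in>A. 1 - bit z i / a) =
     coeff ([:1, - ((1 - a) / a):] ^ card z * [:1, 1:] ^ (N - card z)) k"
    using esym_coeff[of "{1..N}" "\<lambda>i. 1 - bit z i / a" k] by simp
  moreover have "real (N choose k) \<noteq> 0" using assms(3) by simp
  ultimately show ?thesis by (simp add: krawtchouk_def)
qed


lemma perm_exists:
  assumes "finite I" "A \<subseteq> I" "B \<subseteq> I" "card A = card B"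
  shows "\<exists>p. p permutes I \<and> p ` A = B"
proof -
  have fA: "finite A" "finite B" using assms finite_subset by auto
  obtain f where f: "bij_betw f A B" using finite_same_card_bij[OF fA assms(4)] by blast
  have "card (I - A) = card (I - B)" using assms fA by (simp add: card_Diff_subset)
  then obtain g where g: "bij_betw g (I - A) (I - B)"
    using finite_same_card_bij assms(1) by (meson finite_Diff)
  define p where "p x = (if x \<in> A then f x else if x \<in> I then g x else x)" for x
  have "bij_betw p A B" using f by (subst bij_betw_cong[where g=f]) (auto simp: p_def)
  moreover have "bij_betw p (I - A) (I - B)" using g by (subst bij_betw_cong[where g=g]) (auto simp: p_def)
  ultimately have "bij_betw p (A \<union> (I - A)) (B \<union> (I - B))" by (rule bij_betw_combine) auto
  moreover have "A \<union> (I - A) = I" "B \<union> (I - B) = I" using assms by auto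
  ultimately have "bij_betw p I I" by simp
  then have "p permutes I" by (rule bij_imp_permutes) (use assms(2) in \<open>auto simp: p_def\<close>)
  moreover have "p ` A = B" using \<open>bij_betw p A B\<close> by (simp add: bij_betw_def)
  ultimately show ?thesis by blast
qed

lemma sum_perm_image:
  assumes "p permutes I"
  shows "(\<Sum>S\<in>Pow I. F (p ` S)) = (\<Sum>S\<in>Pow I. (F S :: real))"
proof -
  have inj: "inj p" using assms permutes_inj by blast
  have "inj_on ((`) p) (Pow I)" using inj by (simp add: inj_on_def inj_image_eq_iff)
  moreover have "(`) p ` Pow I = Pow I"
  proof
    show "(`) p ` Pow I \<subseteq> Pow I" using permutes_image[OF assms] by auto
    show "Pow I \<subseteq> (`) p ` Pow I"
    proof
      fix S assume S: "S \<in> Pow I"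
      have "p ` (inv p ` S) = S" by (simp add: image_comp permutes_inv_o(1)[OF assms])
      moreover have "inv p ` S \<subseteq> I" using S permutes_image[OF permutes_inv[OF assms]] by auto
      ultimately show "S \<in> (`) p ` Pow I" by blast
    qed
  qed
  ultimately show ?thesis using sum.reindex[of "(`) p" "Pow I" F] by simp
qed

lemma sym_sum:
  assumes "finite I" "A \<subseteq> I" "B \<subseteq> I" "card A = card B"
    and hinv: "\<And>p S. p permutes I \<Longrightarrow> S \<subseteq> I \<Longrightarrow> h (p ` S) = h S"
  shows "(\<Sum>S\<in>Pow I. h S * (\<Prod>i\<in>A. g (bit S i))) = (\<Sum>S\<in>Pow I. h S * (\<Prod>i\<in>B. (g (bit S i) :: real)))"
proof -
  obtain p where p: "p permutes I" "p ` A = B" using perm_exists[OF assms(1-4)] by blast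
  have inj: "inj p" using p permutes_inj by blast
  have "(\<Sum>S\<in>Pow I. h S * (\<Prod>i\<in>B. g (bit S i))) = (\<Sum>S\<in>Pow I. h (p ` S) * (\<Prod>i\<in>p ` A. g (bit (p ` S) i)))"
    using sum_perm_image[OF p(1), of "\<lambda>S. h S * (\<Prod>i\<in>B. g (bit S i))"] p(2) by simp
  also have "\<dots> = (\<Sum>S\<in>Pow I. h S * (\<Prod>i\<in>A. g (bit S i)))"
  proof (rule sum.cong)
    fix S assume "S \<in> Pow I"
    then have "h (p ` S) = h S" using hinv p by auto
    moreover have "(\<Prod>i\<in>p ` A. g (bit (p ` S) i)) = (\<Prod>i\<in>A. g (bit S i))"
      using inj by (simp add: prod.reindex inj_on_def bit_def inj_image_mem_iff)
    ultimately show "h (p ` S) * (\<Prod>i\<in>p ` A. g (bit (p ` S) i)) = h S * (\<Prod>i\<in>A. g (bit S i))" by simp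
  qed simp
  finally show ?thesis by simp
qed

lemma avg:
  assumes "finite I" "A0 \<subseteq> I"
    and "\<And>A B. A \<subseteq> I \<Longrightarrow> B \<subseteq> I \<Longrightarrow> card A = card B \<Longrightarrow> F A = F B"
  shows "(\<Sum>B\<in>{B\<in>Pow I. card B = card A0}. F B) = real (card I choose card A0) * (F A0 :: real)"
proof -
  have "(\<Sum>B\<in>{B\<in>Pow I. card B = card A0}. F B) = (\<Sum>B\<in>{B\<in>Pow I. card B = card A0}. F A0)"
  proof (rule sum.cong[OF refl])
    fix B assume "B \<in> {B\<in>Pow I. card B = card A0}"
    then show "F B = F A0" using assms(3)[of B A0] assms(2) by auto
  qed
  also have "\<dots> = real (card {B. B \<subseteq> I \<and> card B = card A0}) * F A0" by simp
  also have "\<dots> = real (card I choose card A0) * F A0" by (simp add: n_subsets assms(1))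
  finally show ?thesis .
qed


lemma card_le_N: "A \<subseteq> {1..N} \<Longrightarrow> card A \<le> N"
  using card_mono[of "{1..N}" A] by simp

lemma kappa_eq:
  assumes ex: "exch_law N W" and a: "a \<noteq> 0" and A: "A \<subseteq> {1..N}"
  shows "(\<Sum>S\<in>Pow {1..N}. W S * (\<Prod>k\<in>A. 1 - bit S k / a))
       = (\<Sum>S\<in>Pow {1..N}. W S * krawtchouk N a (card S) (card A))"
proof -
  let ?I = "{1..N::nat}"
  let ?E = "\<lambda>B. (\<Sum>S\<in>Pow ?I. W S * (\<Prod>k\<in>B. 1 - bit S k / a))"
  have hinv: "\<And>p S. p permutes ?I \<Longrightarrow> S \<subseteq> ?I \<Longrightarrow> W (p ` S) = W S"
    using ex unfolding exch_law_def by blast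
  have sym: "?E A' = ?E B" if "A' \<subseteq> ?I" "B \<subseteq> ?I" "card A' = card B" for A' B
    using sym_sum[of ?I A' B W "\<lambda>b. 1 - b / a", OF _ that hinv] by simp
  have k: "card A \<le> N" using A card_le_N by blast
  have "real (N choose card A) * (\<Sum>S\<in>Pow ?I. W S * krawtchouk N a (card S) (card A))
      = (\<Sum>S\<in>Pow ?I. W S * (real (N choose card A) * krawtchouk N a (card S) (card A)))"
    by (simp add: sum_distrib_left algebra_simps)
  also have "\<dots> = (\<Sum>S\<in>Pow ?I. W S * (\<Sum>B\<in>{B\<in>Pow ?I. card B = card A}. \<Prod>i\<in>B. 1 - bit S i / a))"
    using E1[OF _ a k] by (intro sum.cong) auto
  also have "\<dots> = (\<Sum>B\<in>{B\<in>Pow ?I. card B = card A}. ?E B)"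
    unfolding sum_distrib_left by (rule sum.swap)
  also have "\<dots> = real (N choose card A) * ?E A"
    using avg[OF finite_atLeastAtMost A sym] by (simp only: card_atLeastAtMost diff_Suc_1)
  finally show ?thesis using k by simp
qed

lemma Y_eq:
  assumes a: "a \<noteq> 0" and A: "A \<subseteq> {1..N}"
  shows "(\<Sum>y\<in>{y\<in>Pow {1..N}. card y = j}. \<Prod>i\<in>A. 1 - bit y i / a)
       = real (N choose j) * krawtchouk N a j (card A)"
proof -
  let ?I = "{1..N::nat}"
  define h where "h y = (if card y = j then 1 else (0::real))" for y :: "nat set"
  let ?G = "\<lambda>B. (\<Sum>y\<in>Pow ?I. h y * (\<Prod>i\<in>B. 1 - bit y i / a))"
  have G: "?G B = (\<Sum>y\<in>{y\<in>Pow ?I. card y = j}. \<Prod>i\<in>B. 1 - bit y i / a)" for B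
  proof -
    have "?G B = (\<Sum>y\<in>Pow ?I. if card y = j then (\<Prod>i\<in>B. 1 - bit y i / a) else 0)"
      by (intro sum.cong) (auto simp: h_def)
    also have "\<dots> = (\<Sum>y\<in>{y\<in>Pow ?I. card y = j}. \<Prod>i\<in>B. 1 - bit y i / a)"
      by (rule sum.inter_filter[symmetric]) simp
    finally show ?thesis .
  qed
  have hinv: "\<And>p S. p permutes ?I \<Longrightarrow> S \<subseteq> ?I \<Longrightarrow> h (p ` S) = h S"
    unfolding h_def by (subst card_image) (auto dest: permutes_inj inj_on_subset)
  have sym: "?G A' = ?G B" if "A' \<subseteq> ?I" "B \<subseteq> ?I" "card A' = card B" for A' B
    using sym_sum[of ?I A' B h "\<lambda>b. 1 - b / a", OF _ that hinv] by simp
  have k: "card A \<le> N" using A card_le_N by blast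
  have "real (N choose card A) * ?G A = (\<Sum>B\<in>{B\<in>Pow ?I. card B = card A}. ?G B)"
    using avg[OF finite_atLeastAtMost A sym] by (simp only: card_atLeastAtMost diff_Suc_1)
  also have "\<dots> = (\<Sum>y\<in>Pow ?I. h y * (\<Sum>B\<in>{B\<in>Pow ?I. card B = card A}. \<Prod>i\<in>B. 1 - bit y i / a))"
    unfolding sum_distrib_left by (rule sum.swap)
  also have "\<dots> = (\<Sum>y\<in>Pow ?I. h y * (real (N choose card A) * krawtchouk N a j (card A)))"
    using E1[OF _ a k] by (intro sum.cong) (auto simp: h_def)
  also have "\<dots> = real (card {y. y \<subseteq> ?I \<and> card y = j}) * (real (N choose card A) * krawtchouk N a j (card A))"
  proof -
    have "(\<Sum>y\<in>Pow ?I. h y) = (\<Sum>y\<in>{y\<in>Pow ?I. card y = j}. 1)"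
      unfolding h_def by (rule sum.inter_filter[symmetric]) simp
    then have hs: "(\<Sum>y\<in>Pow ?I. h y) = real (card {y. y \<subseteq> ?I \<and> card y = j})" by simp
    show ?thesis by (simp only: sum_distrib_right[symmetric] hs)
  qed
  also have "\<dots> = real (N choose j) * (real (N choose card A) * krawtchouk N a j (card A))"
    by (simp add: n_subsets)
  finally show ?thesis using k G by simp
qed


lemma group_card:
  "(\<Sum>A\<in>Pow {1..N} - {{}}. G A) = (\<Sum>k=1..N. \<Sum>A\<in>{A\<in>Pow {1..N}. card A = k}. (G A :: real))"
proof -
  have sub: "card ` (Pow {1..N} - {{}}) \<subseteq> {1..N}"
  proof
    fix k assume "k \<in> card ` (Pow {1..N} - {{}})"
    then obtain A where A: "A \<subseteq> {1..N}" "A \<noteq> {}" "k = card A" by auto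
    have "finite A" using A finite_subset by blast
    then show "k \<in> {1..N}" using A card_le_N[of A N] by (auto simp: card_gt_0_iff Suc_le_eq)
  qed
  have "(\<Sum>A\<in>Pow {1..N} - {{}}. G A) = (\<Sum>k=1..N. \<Sum>A\<in>{A\<in>Pow {1..N} - {{}}. card A = k}. G A)"
    by (rule sum.group[symmetric]) (use sub in auto)
  also have "\<dots> = (\<Sum>k=1..N. \<Sum>A\<in>{A\<in>Pow {1..N}. card A = k}. G A)"
  proof (rule sum.cong[OF refl])
    fix k :: nat assume "k \<in> {1..N}"
    then have "{A\<in>Pow {1..N} - {{}}. card A = k} = {A\<in>Pow {1..N}. card A = k}" by auto
    then show "(\<Sum>A\<in>{A\<in>Pow {1..N} - {{}}. card A = k}. G A) = (\<Sum>A\<in>{A\<in>Pow {1..N}. card A = k}. G A)" by simp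
  qed
  finally show ?thesis .
qed

lemma lump:
  assumes ex: "exch_law N (w t)" and p: "0 < \<phi>" "\<phi> < 1" "0 < \<gamma>" "\<gamma> < 1" and x: "x \<subseteq> {1..N}"
  shows "(\<Sum>y\<in>{y\<in>Pow {1..N}. card y = j}. trans_p N \<phi> \<gamma> w t x y) = trans_q N \<phi> \<gamma> w t (card x) j"
proof -
  let ?I = "{1..N::nat}"
  define \<alpha> where "\<alpha> = min \<phi> \<gamma>"
  have a0: "\<alpha> \<noteq> 0" using p by (simp add: \<alpha>_def min_def)
  let ?Y = "{y\<in>Pow ?I. card y = j}"
  let ?P = "Pow ?I - {{}}"
  define c where "c = \<phi> ^ j * (1 - \<phi>) ^ (N - j)"
  define X where "X A = (\<Prod>k\<in>A. 1 - bit x k / \<gamma>)" for A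
  define kt where "kt k = kappa_tilde N \<alpha> w t k" for k
  define g where "g A y = kt (card A) * X A * (\<Prod>k\<in>A. 1 - bit y k / \<phi>)" for A y
  have kap: "kappa N \<alpha> w t A = kt (card A)" if "A \<subseteq> ?I" for A
    unfolding kappa_def kappa_tilde_def kt_def using kappa_eq[OF ex a0 that] by simp
  have step1: "trans_p N \<phi> \<gamma> w t x y = c * (1 + (\<Sum>A\<in>?P. g A y))" if y: "y \<in> ?Y" for y
  proof -
    have "(\<Sum>A\<in>?P. kappa N \<alpha> w t A * (\<Prod>k\<in>A. (1 - bit y k / \<phi>) * (1 - bit x k / \<gamma>))) = (\<Sum>A\<in>?P. g A y)"
      by (intro sum.cong refl) (auto simp: kap g_def X_def prod.distrib)
    then show ?thesis using y unfolding trans_p_def Let_def \<alpha>_def[symmetric] c_def by simp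
  qed
  have "(\<Sum>y\<in>?Y. trans_p N \<phi> \<gamma> w t x y) = (\<Sum>y\<in>?Y. c * (1 + (\<Sum>A\<in>?P. g A y)))"
    using step1 by (rule sum.cong[OF refl])
  also have "\<dots> = c * (real (card ?Y) + (\<Sum>A\<in>?P. \<Sum>y\<in>?Y. g A y))"
    by (simp add: sum_distrib_left[symmetric] sum.distrib) (rule disjI2, rule sum.swap)
  also have "(\<Sum>A\<in>?P. \<Sum>y\<in>?Y. g A y) = (\<Sum>A\<in>?P. kt (card A) * real (N choose j) * krawtchouk N \<phi> j (card A) * X A)"
  proof (rule sum.cong[OF refl])
    fix A assume "A \<in> ?P"
    then have A: "A \<subseteq> ?I" by auto
    have "(\<Sum>y\<in>?Y. g A y) = kt (card A) * X A * (\<Sum>y\<in>?Y. \<Prod>k\<in>A. 1 - bit y k / \<phi>)"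
      unfolding g_def by (simp add: sum_distrib_left)
    also have "\<dots> = kt (card A) * X A * (real (N choose j) * krawtchouk N \<phi> j (card A))"
      using Y_eq[of \<phi> A N j] p A by simp
    finally show "(\<Sum>y\<in>?Y. g A y) = kt (card A) * real (N choose j) * krawtchouk N \<phi> j (card A) * X A"
      by simp
  qed
  also have "\<dots> = (\<Sum>k=1..N. \<Sum>A\<in>{A\<in>Pow ?I. card A = k}. kt (card A) * real (N choose j) * krawtchouk N \<phi> j (card A) * X A)"
    by (rule group_card)
  also have "\<dots> = (\<Sum>k=1..N. kt k * real (N choose j) * krawtchouk N \<phi> j k * (real (N choose k) * krawtchouk N \<gamma> (card x) k))"
  proof (rule sum.cong[OF refl])
    fix k assume k: "k \<in> {1..N}"
    have "(\<Sum>A\<in>{A\<in>Pow ?I. card A = k}. kt (card A) * real (N choose j) * krawtchouk N \<phi> j (card A) * X A)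
        = (\<Sum>A\<in>{A\<in>Pow ?I. card A = k}. kt k * real (N choose j) * krawtchouk N \<phi> j k * X A)"
      by (rule sum.cong) auto
    also have "\<dots> = kt k * real (N choose j) * krawtchouk N \<phi> j k * (\<Sum>A\<in>{A\<in>Pow ?I. card A = k}. X A)"
      by (simp add: sum_distrib_left)
    also have "\<dots> = kt k * real (N choose j) * krawtchouk N \<phi> j k * (real (N choose k) * krawtchouk N \<gamma> (card x) k)"
      using E1[OF x, of \<gamma> k] p k unfolding X_def by simp
    finally show "(\<Sum>A\<in>{A\<in>Pow ?I. card A = k}. kt (card A) * real (N choose j) * krawtchouk N \<phi> j (card A) * X A)
        = kt k * real (N choose j) * krawtchouk N \<phi> j k * (real (N choose k) * krawtchouk N \<gamma> (card x) k)" .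
  qed
  also have "real (card ?Y) = real (N choose j)"
    by (simp add: n_subsets)
  finally show ?thesis
    unfolding trans_q_def Let_def \<alpha>_def[symmetric] c_def kt_def
    by (simp add: sum_distrib_left sum_distrib_right algebra_simps)
qed


lemma Icc_Suc: "{1..Suc T} = insert (Suc T) {1..T}" by auto

lemma pp_upd:
  "path_prob \<mu> P (Suc T) (xs(Suc T := y)) = path_prob \<mu> P T xs * P (Suc T) (xs T) y"
proof -
  have "(\<Prod>t\<in>{1..T}. P t ((xs(Suc T := y)) (t - 1)) ((xs(Suc T := y)) t)) = (\<Prod>t\<in>{1..T}. P t (xs (t - 1)) (xs t))"
    by (rule prod.cong) auto
  then show ?thesis unfolding path_prob_def Icc_Suc by (simp add: algebra_simps)
qed

lemma path_sum:
  fixes P :: "nat \<Rightarrow> nat set \<Rightarrow> nat set \<Rightarrow> real" and Q :: "nat \<Rightarrow> nat \<Rightarrow> nat \<Rightarrow> real"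
  assumes lump: "\<And>t x j. t \<ge> 1 \<Longrightarrow> x \<subseteq> {1..N} \<Longrightarrow> (\<Sum>y\<in>{y\<in>Pow {1..N}. card y = j}. P t x y) = Q t (card x) j"
  shows "(\<Sum>xs \<in> {xs \<in> PiE {0..T} (\<lambda>_. Pow {1..N}). \<forall>t\<in>{0..T}. card (xs t) = js t}. path_prob \<mu> P T xs)
     = (\<Sum>x \<in> {x \<in> Pow {1..N}. card x = js 0}. \<mu> x) * (\<Prod>t\<in>{1..T}. Q t (js (t - 1)) (js t))"
proof (induction T)
  case 0
  have "(\<Sum>xs \<in> {xs \<in> PiE {0..0} (\<lambda>_. Pow {1..N}). \<forall>t\<in>{0..0}. card (xs t) = js t}. path_prob \<mu> P 0 xs)
      = (\<Sum>x \<in> {x \<in> Pow {1..N}. card x = js 0}. \<mu> x)"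
  proof (rule sum.reindex_bij_witness[where i = "\<lambda>x. \<lambda>t\<in>{0..0}. x" and j = "\<lambda>xs. xs 0"])
    fix a assume "a \<in> {xs \<in> PiE {0..0} (\<lambda>_. Pow {1..N::nat}). \<forall>t\<in>{0..0}. card (xs t) = js t}"
    then show "(\<lambda>t\<in>{0..0}. a 0) = a" by (auto simp: PiE_iff extensional_def fun_eq_iff)
  qed (auto simp: path_prob_def)
  then show ?case by simp
next
  case (Suc T)
  let ?S = "\<lambda>T. {xs \<in> PiE {0..T} (\<lambda>_. Pow {1..N}). \<forall>t\<in>{0..T}. card (xs t) = js t}"
  let ?Y = "{y\<in>Pow {1..N}. card y = js (Suc T)}"
  have "(\<Sum>xs\<in>?S (Suc T). path_prob \<mu> P (Suc T) xs) = (\<Sum>(xs, y)\<in>?S T \<times> ?Y. path_prob \<mu> P (Suc T) (xs(Suc T := y)))"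
  proof (rule sum.reindex_bij_witness[where i = "\<lambda>(xs, y). xs(Suc T := y)" and j = "\<lambda>xs. (xs(Suc T := undefined), xs (Suc T))"])
    fix a assume a: "a \<in> ?S (Suc T)"
    show "(case (a(Suc T := undefined), a (Suc T)) of (xs, y) \<Rightarrow> xs(Suc T := y)) = a" by simp
    show "(a(Suc T := undefined), a (Suc T)) \<in> ?S T \<times> ?Y"
      using a by (auto simp: PiE_iff extensional_def)
    show "(case (a(Suc T := undefined), a (Suc T)) of (xs, y) \<Rightarrow> path_prob \<mu> P (Suc T) (xs(Suc T := y))) = path_prob \<mu> P (Suc T) a"
      by simp
  next
    fix b assume b: "b \<in> ?S T \<times> ?Y"
    then obtain xs y where b': "b = (xs, y)" "xs \<in> ?S T" "y \<in> ?Y" by auto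
    then have "xs (Suc T) = undefined" by (auto simp: PiE_iff extensional_def)
    then have e: "xs(Suc T := y, Suc T := undefined) = xs" by (auto simp: fun_eq_iff)
    show "(\<lambda>xs. (xs(Suc T := undefined), xs (Suc T))) ((\<lambda>(xs, y). xs(Suc T := y)) b) = b"
      using b' e by simp
    show "(\<lambda>(xs, y). xs(Suc T := y)) b \<in> ?S (Suc T)"
      using b' by (auto simp: PiE_iff extensional_def)
  qed
  also have "\<dots> = (\<Sum>xs\<in>?S T. \<Sum>y\<in>?Y. path_prob \<mu> P T xs * P (Suc T) (xs T) y)"
    by (simp add: sum.cartesian_product[symmetric] pp_upd)
  also have "\<dots> = (\<Sum>xs\<in>?S T. path_prob \<mu> P T xs * Q (Suc T) (js T) (js (Suc T)))"
  proof (rule sum.cong[OF refl])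
    fix xs assume xs: "xs \<in> ?S T"
    then have "xs T \<subseteq> {1..N}" "card (xs T) = js T" by (auto simp: PiE_iff)
    then show "(\<Sum>y\<in>?Y. path_prob \<mu> P T xs * P (Suc T) (xs T) y) = path_prob \<mu> P T xs * Q (Suc T) (js T) (js (Suc T))"
      using lump[of "Suc T" "xs T" "js (Suc T)"] by (simp add: sum_distrib_left[symmetric])
  qed
  also have "\<dots> = (\<Sum>xs\<in>?S T. path_prob \<mu> P T xs) * Q (Suc T) (js T) (js (Suc T))"
    by (simp add: sum_distrib_right)
  also have "\<dots> = (\<Sum>x \<in> {x \<in> Pow {1..N}. card x = js 0}. \<mu> x) * (\<Prod>t\<in>{1..Suc T}. Q t (js (t - 1)) (js t))"
    unfolding Suc.IH Icc_Suc by (simp add: algebra_simps)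
  finally show ?case .
qed

theorem proposition8:
  fixes N :: nat and \<phi> \<gamma> :: real
    and w :: "nat \<Rightarrow> nat set \<Rightarrow> real"
    and \<mu> :: "nat set \<Rightarrow> real"
  assumes "N \<ge> 1"
    and "0 < \<phi>" "\<phi> < 1" "0 < \<gamma>" "\<gamma> < 1" "\<phi> + \<gamma> \<ge> 1"
    and "\<And>t. t \<ge> 1 \<Longrightarrow> exch_law N (w t)"
    and "\<forall>x\<in>Pow {1..N}. \<mu> x \<ge> 0" "(\<Sum>x\<in>Pow {1..N}. \<mu> x) = 1"
  shows "\<forall>T (js :: nat \<Rightarrow> nat).
     (\<Sum>xs \<in> {xs \<in> PiE {0..T} (\<lambda>_. Pow {1..N}). \<forall>t\<in>{0..T}. card (xs t) = js t}.
         path_prob \<mu> (trans_p N \<phi> \<gamma> w) T xs)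
     = (\<Sum>x \<in> {x \<in> Pow {1..N}. card x = js 0}. \<mu> x) *
       (\<Prod>t\<in>{1..T}. trans_q N \<phi> \<gamma> w t (js (t - 1)) (js t))"
proof (intro allI)
  fix T and js :: "nat \<Rightarrow> nat"
  show "(\<Sum>xs \<in> {xs \<in> PiE {0..T} (\<lambda>_. Pow {1..N}). \<forall>t\<in>{0..T}. card (xs t) = js t}.
         path_prob \<mu> (trans_p N \<phi> \<gamma> w) T xs)
     = (\<Sum>x \<in> {x \<in> Pow {1..N}. card x = js 0}. \<mu> x) *
       (\<Prod>t\<in>{1..T}. trans_q N \<phi> \<gamma> w t (js (t - 1)) (js t))"
    by (rule path_sum) (rule lump, use assms in auto)
qed

end
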